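(* Let $p,q\geq 3$, let $K_p$ be the complete graph on $p$ vertices and $C_q$ the cycle on $q$ vertices. Then $\mathrm{mbt}(K_p\Box C_q)\geq \Delta(K_p\Box C_q)+1$.
   Context: A book embedding of a graph $G$ consists of a linear ordering of $V(G)$ (the vertices placed on the spine) together with an assignment of each edge to one of a set of pages such that no two edges on the same page cross, i.e. there are no two edges $uv$, $xy$ on the same page with $u<x<v<y$ in the ordering. A book embedding is matching if on every page each vertex is incident with at most one edge of that page. The matching book thickness $\mathrm{mbt}(G)$ is the minimum number of pages over all matching book embeddings of $G$. $\Delta(G)$ denotes the maximum degree of $G$. The Cartesian product $G\Box B$ has vertex set $V(G)\times V(B)$, with $(u_1,v_1)$ adjacent to $(u_2,v_2)$ iff either $u_1=u_2$ and $v_1v_2\in E(B)$, or $v_1=v_2$ and $u_1u_2\in E(G)$. *)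

theory Defs
  imports Main
begin

text \<open>A (finite simple) graph is a pair (V, E) of a vertex set and a set of
  edges, each edge being a two-element subset of V.\<close>

type_synonym 'a graph = "'a set \<times> 'a set set"

definition verts :: "'a graph \<Rightarrow> 'a set" where "verts G = fst G"
definition edges :: "'a graph \<Rightarrow> 'a set set" where "edges G = snd G"

definition complete_graph :: "nat \<Rightarrow> nat graph" where
  "complete_graph p = ({0..<p}, {{i, j} | i j. i < p \<and> j < p \<and> i \<noteq> j})"

definition cycle_graph :: "nat \<Rightarrow> nat graph" where
  "cycle_graph q = ({0..<q}, {{i, (i + 1) mod q} | i. i < q})"

definition cart_prod :: "'a graph \<Rightarrow> 'b graph \<Rightarrow> ('a \<times> 'b) graph" (infixr "\<box>" 80) where
  "G \<box> B = (verts G \<times> verts B,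
     {{(u1, v), (u2, v)} | u1 u2 v. {u1, u2} \<in> edges G \<and> v \<in> verts B} \<union>
     {{(u, v1), (u, v2)} | u v1 v2. u \<in> verts G \<and> {v1, v2} \<in> edges B})"

definition degree :: "'a graph \<Rightarrow> 'a \<Rightarrow> nat" where
  "degree G v = card {e \<in> edges G. v \<in> e}"

definition max_degree :: "'a graph \<Rightarrow> nat" where
  "max_degree G = Max (degree G ` verts G)"

definition crossing :: "('a \<Rightarrow> nat) \<Rightarrow> 'a set \<Rightarrow> 'a set \<Rightarrow> bool" where
  "crossing ord e f \<longleftrightarrow> (\<exists>u v x y. e = {u, v} \<and> f = {x, y} \<and>
       ord u < ord x \<and> ord x < ord v \<and> ord v < ord y)"

definition matching_book_embedding ::
  "'a graph \<Rightarrow> nat \<Rightarrow> ('a \<Rightarrow> nat) \<Rightarrow> ('a set \<Rightarrow> nat) \<Rightarrow> bool" where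
  "matching_book_embedding G k ord pg \<longleftrightarrow>
     inj_on ord (verts G) \<and>
     (\<forall>e \<in> edges G. pg e < k) \<and>
     (\<forall>e \<in> edges G. \<forall>f \<in> edges G. pg e = pg f \<longrightarrow> \<not> crossing ord e f) \<and>
     (\<forall>e \<in> edges G. \<forall>f \<in> edges G. pg e = pg f \<and> e \<noteq> f \<longrightarrow> e \<inter> f = {})"

definition mbt :: "'a graph \<Rightarrow> nat" where
  "mbt G = (LEAST k. \<exists>ord pg. matching_book_embedding G k ord pg)"

end

theory Submission
  imports Defs
begin

lemma parity:
  fixes G :: "'a graph"
  assumes mbe: "matching_book_embedding G k ord pg"
  and fin: "finite (verts G)"
  and two: "\<And>f. f \<in> edges G \<Longrightarrow> \<exists>x y. f = {x,y} \<and> x \<noteq> y \<and> x \<in> verts G \<and> y \<in> verts G"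
  and cov: "\<And>w. w \<in> verts G \<Longrightarrow> \<exists>f\<in>edges G. w \<in> f \<and> pg f = pg e"
  and e: "e \<in> edges G" "e = {u,v}" "ord u < ord v" "u \<in> verts G" "v \<in> verts G"
  shows "odd (card {z\<in>verts G. ord z < ord u} + card {z\<in>verts G. ord z < ord v})"
proof -
  have inj: "inj_on ord (verts G)"
   and nc: "\<And>f g. f \<in> edges G \<Longrightarrow> g \<in> edges G \<Longrightarrow> pg f = pg g \<Longrightarrow> \<not> crossing ord f g"
   and mt: "\<And>f g. f \<in> edges G \<Longrightarrow> g \<in> edges G \<Longrightarrow> pg f = pg g \<Longrightarrow> f \<noteq> g \<Longrightarrow> f \<inter> g = {}"
    using mbe unfolding matching_book_embedding_def by blast+
  have sub: "\<And>f. f \<in> edges G \<Longrightarrow> f \<subseteq> verts G" using two by blast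
  define S where "S = {w\<in>verts G. ord u < ord w \<and> ord w < ord v}"
  have closed: "y \<in> S" if f: "f \<in> edges G" "pg f = pg e" "f = {x,y}" "x \<in> S" for f x y
  proof -
    have xV: "x \<in> verts G" and yV: "y \<in> verts G" using sub[OF f(1)] f(3) by auto
    have "x \<noteq> u" "x \<noteq> v" using that(4) unfolding S_def by auto
    hence "f \<noteq> e" using e(2) f(3) by auto
    hence "f \<inter> e = {}" using mt[OF f(1) e(1) f(2)] by blast
    hence "y \<noteq> u" "y \<noteq> v" using e(2) f(3) by auto
    hence ne: "ord y \<noteq> ord u" "ord y \<noteq> ord v" using inj yV e(4,5) unfolding inj_on_def by metis+
    have c1: "\<not> crossing ord f e" using nc[OF f(1) e(1) f(2)] .
    have c2: "\<not> crossing ord e f" using nc[OF e(1) f(1) f(2)[symmetric]] .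
    have "\<not> ord y < ord u"
    proof
      assume "ord y < ord u"
      hence "crossing ord f e" unfolding crossing_def using f(3) e(2) that(4) unfolding S_def
        by (intro exI[of _ y] exI[of _ x] exI[of _ u] exI[of _ v]) auto
      with c1 show False by simp
    qed
    moreover have "\<not> ord y > ord v"
    proof
      assume "ord y > ord v"
      hence "crossing ord e f" unfolding crossing_def using f(3) e(2) that(4) unfolding S_def
        by (intro exI[of _ u] exI[of _ v] exI[of _ x] exI[of _ y]) auto
      with c2 show False by simp
    qed
    ultimately show ?thesis using ne yV unfolding S_def by auto
  qed
  define F where "F = {f\<in>edges G. pg f = pg e \<and> f \<inter> S \<noteq> {}}"
  have US: "\<Union>F = S"
  proof
    show "\<Union>F \<subseteq> S"
    proof
      fix z assume "z \<in> \<Union>F"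
      then obtain f where f: "f \<in> F" "z \<in> f" by blast
      then obtain x y where xy: "f = {x,y}" using two unfolding F_def by blast
      have fe: "f \<in> edges G" "pg f = pg e" "f \<inter> S \<noteq> {}" using f unfolding F_def by auto
      show "z \<in> S"
      proof (cases "x \<in> S")
        case True
        then have "y \<in> S" using closed[OF fe(1,2) xy] by blast
        then show ?thesis using True f(2) xy by auto
      next
        case False
        then have "y \<in> S" using fe(3) xy by auto
        then have "x \<in> S" using closed[OF fe(1,2), of y x] xy by (auto simp: insert_commute)
        then show ?thesis using False by blast
      qed
    qed
  next
    show "S \<subseteq> \<Union>F"
    proof
      fix w assume w: "w \<in> S"
      then have "w \<in> verts G" unfolding S_def by auto
      then obtain f where "f \<in> edges G" "w \<in> f" "pg f = pg e" using cov by blast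
      then show "w \<in> \<Union>F" using w unfolding F_def by blast
    qed
  qed
  have pw: "pairwise disjnt F"
    unfolding pairwise_def disjnt_def F_def using mt by auto
  have c2: "\<And>f. f \<in> F \<Longrightarrow> card f = 2" using two unfolding F_def by fastforce
  have finF: "finite F"
  proof -
    have "F \<subseteq> Pow (verts G)" using sub unfolding F_def by auto
    thus ?thesis using fin finite_subset by blast
  qed
  have "card S = sum card F" using card_Union_disjoint[OF pw] US
    by (metis c2 card.infinite zero_neq_numeral)
  also have "\<dots> = 2 * card F" using c2 by simp
  finally have evS: "even (card S)" by simp
  have split: "{z\<in>verts G. ord z < ord v} = {z\<in>verts G. ord z < ord u} \<union> ({u} \<union> S)"
  proof -
    have "z = u" if "z \<in> verts G" "ord z = ord u" for z
      using inj that e(4) unfolding inj_on_def by blast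
    thus ?thesis unfolding S_def using e(3,4) by (auto simp: not_less_iff_gr_or_eq)
  qed
  have finS: "finite S" unfolding S_def using fin by simp
  have "card {z\<in>verts G. ord z < ord v} = card {z\<in>verts G. ord z < ord u} + (1 + card S)"
    unfolding split
    apply (subst card_Un_disjoint)
    using fin finS unfolding S_def by auto
  thus ?thesis using evS by simp
qed

definition adjG :: "nat \<Rightarrow> nat \<Rightarrow> nat\<times>nat \<Rightarrow> nat\<times>nat \<Rightarrow> bool" where
 "adjG p q x y \<longleftrightarrow> fst x < p \<and> fst y < p \<and> snd x < q \<and> snd y < q \<and>
    ((snd x = snd y \<and> fst x \<noteq> fst y) \<or> (fst x = fst y \<and> (snd y = (snd x + 1) mod q \<or> snd x = (snd y + 1) mod q)))"

lemma mod_suc: "(j::nat) < q \<Longrightarrow> Suc j mod q = (if Suc j = q then 0 else Suc j)"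
  by auto

lemma edges_cart: "edges (G \<box> B) = {{(u1, v), (u2, v)} | u1 u2 v. {u1, u2} \<in> edges G \<and> v \<in> verts B} \<union>
     {{(u, v1), (u, v2)} | u v1 v2. u \<in> verts G \<and> {v1, v2} \<in> edges B}"
  by (simp add: cart_prod_def edges_def)

lemma verts_C: "verts (cycle_graph q) = {0..<q}" by (simp add: verts_def cycle_graph_def)
lemma verts_K: "verts (complete_graph q) = {0..<q}" by (simp add: verts_def complete_graph_def)

lemma memU1: "{i,i'} \<in> X \<Longrightarrow> (j::nat) \<in> Y \<Longrightarrow> e = {(i::nat,j),(i',j)} \<Longrightarrow> e \<in> {{(u1, v), (u2, v)} | u1 u2 v. {u1, u2} \<in> X \<and> v \<in> Y} \<union> Z"
  by (rule UnI1) blast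
lemma memU2: "{j,j'} \<in> X \<Longrightarrow> (i::nat) \<in> Y \<Longrightarrow> e = {(i::nat,j),(i,j'::nat)} \<Longrightarrow> e \<in> Z \<union> {{(u, v1), (u, v2)} | u v1 v2. u \<in> Y \<and> {v1, v2} \<in> X}"
  by (rule UnI2) blast

lemma edges_char:
  assumes "q \<ge> 3"
  shows "edges (complete_graph p \<box> cycle_graph q) = {{x,y} | x y. adjG p q x y}"
proof
  show "edges (complete_graph p \<box> cycle_graph q) \<subseteq> {{x,y} | x y. adjG p q x y}"
  proof
    fix e assume "e \<in> edges (complete_graph p \<box> cycle_graph q)"
    then have "(\<exists>u1 u2 v. e = {(u1,v),(u2,v)} \<and> {u1,u2} \<in> edges (complete_graph p) \<and> v \<in> verts (cycle_graph q))
      \<or> (\<exists>u v1 v2. e = {(u,v1),(u,v2)} \<and> u \<in> verts (complete_graph p) \<and> {v1,v2} \<in> edges (cycle_graph q))"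
      unfolding edges_cart by (simp only: Un_iff mem_Collect_eq)
    then show "e \<in> {{x,y} | x y. adjG p q x y}"
    proof (elim disjE exE conjE)
      fix u1 u2 v assume a: "e = {(u1,v),(u2,v)}" "{u1,u2} \<in> edges (complete_graph p)" "v \<in> verts (cycle_graph q)"
      then obtain i j where "{u1,u2} = {i,j}" "i<p" "j<p" "i\<noteq>j"
        unfolding edges_def complete_graph_def by auto
      then have "adjG p q (u1,v) (u2,v)" using a(3) unfolding adjG_def doubleton_eq_iff verts_C by auto
      then show ?thesis using a(1) by (intro CollectI exI[of _ "(u1,v)"] exI[of _ "(u2,v)"] conjI)
    next
      fix u v1 v2 assume b: "e = {(u,v1),(u,v2)}" "u \<in> verts (complete_graph p)" "{v1,v2} \<in> edges (cycle_graph q)"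
      then obtain i where i: "{v1,v2} = {i,(i+1) mod q}" "i<q"
        unfolding edges_def cycle_graph_def by auto
      have "(i+1) mod q < q" using assms by simp
      then have "adjG p q (u,v1) (u,v2)" using b(2) i unfolding adjG_def doubleton_eq_iff verts_K by auto
      then show ?thesis using b(1) by (intro CollectI exI[of _ "(u,v1)"] exI[of _ "(u,v2)"] conjI)
    qed
  qed
next
  show "{{x,y} | x y. adjG p q x y} \<subseteq> edges (complete_graph p \<box> cycle_graph q)"
  proof
    fix e assume "e \<in> {{x,y} | x y. adjG p q x y}"
    then obtain i j i' j' where e: "e = {(i,j),(i',j')}" "adjG p q (i,j) (i',j')" by auto
    then have lt: "i<p" "i'<p" "j<q" "j'<q" unfolding adjG_def by auto
    consider (h) "j = j'" "i \<noteq> i'" | (v1) "i = i'" "j' = (j+1) mod q" | (v2) "i = i'" "j = (j'+1) mod q"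
      using e(2) unfolding adjG_def by auto
    then show "e \<in> edges (complete_graph p \<box> cycle_graph q)"
    proof cases
      case h
      have "{i,i'} \<in> edges (complete_graph p)" unfolding edges_def complete_graph_def using h lt by auto
      moreover have "j \<in> verts (cycle_graph q)" using lt by (simp add: verts_C)
      ultimately show ?thesis unfolding edges_cart using e(1) h(1) by (intro memU1) auto
    next
      case v1
      have "{j,j'} \<in> edges (cycle_graph q)" unfolding edges_def cycle_graph_def using v1 lt by auto
      moreover have "i \<in> verts (complete_graph p)" using lt by (simp add: verts_K)
      ultimately show ?thesis unfolding edges_cart using e(1) v1(1) by (intro memU2) auto
    next
      case v2
      have "{j',j} \<in> edges (cycle_graph q)" unfolding edges_def cycle_graph_def using v2 lt by auto
      hence "{j,j'} \<in> edges (cycle_graph q)" by (simp add: insert_commute)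
      moreover have "i \<in> verts (complete_graph p)" using lt by (simp add: verts_K)
      ultimately show ?thesis unfolding edges_cart using e(1) v2(1) by (intro memU2) auto
    qed
  qed
qed

lemma verts_G: "verts (complete_graph p \<box> cycle_graph q) = {0..<p} \<times> {0..<q}"
  by (simp add: cart_prod_def verts_def complete_graph_def cycle_graph_def)

lemma adj_sym: "adjG p q x y \<Longrightarrow> adjG p q y x"
  unfolding adjG_def by auto

lemma adj_irr: "q \<ge> 3 \<Longrightarrow> \<not> adjG p q x x"
  unfolding adjG_def by (auto simp: mod_suc)

lemma adj_in: "adjG p q x y \<Longrightarrow> x \<in> {0..<p} \<times> {0..<q} \<and> y \<in> {0..<p} \<times> {0..<q}"
  unfolding adjG_def by (cases x; cases y) auto

lemma pred_iff: "(j::nat) < q \<Longrightarrow> b < q \<Longrightarrow> (b = Suc j mod q) = (j = (if b = 0 then q - 1 else b - 1))"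
  by (simp add: mod_suc) linarith

lemma succ_iff: "(j::nat) < q \<Longrightarrow> b < q \<Longrightarrow> (j = Suc b mod q) = (j = (if Suc b = q then 0 else Suc b))"
  by (simp add: mod_suc)

lemma nbrs:
  assumes "q \<ge> 3" "a < p" "b < q"
  shows "{w. adjG p q (a,b) w} = (({0..<p}-{a}) \<times> {b}) \<union> {(a, if b+1 = q then 0 else b+1), (a, if b = 0 then q-1 else b-1)}"
proof (rule set_eqI)
  fix w :: "nat \<times> nat"
  obtain i j where w: "w = (i,j)" by (cases w)
  show "w \<in> {w. adjG p q (a,b) w} \<longleftrightarrow> w \<in> (({0..<p}-{a}) \<times> {b}) \<union> {(a, if b+1 = q then 0 else b+1), (a, if b = 0 then q-1 else b-1)}"
  proof (cases "j < q")
    case True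
    then show ?thesis unfolding w adjG_def using assms
      by (simp add: pred_iff[OF True assms(3)] succ_iff[OF True assms(3)]) auto
  next
    case False
    then show ?thesis unfolding w adjG_def using assms by auto
  qed
qed
lemma card_nbrs:
  assumes "q \<ge> 3" "a < p" "b < q"
  shows "card {w. adjG p q (a,b) w} = p + 1"
proof -
  have d: "(a, if b+1 = q then 0 else b+1) \<noteq> (a, if b = 0 then q-1 else b-1)" using assms by auto
  have "card (({0..<p}-{a}) \<times> {b}) = p - 1" using assms by (simp add: card_cartesian_product)
  moreover have "card {(a, if b+1 = q then 0 else b+1), (a, if b = 0 then q-1 else b-1)} = 2"
    using d by simp
  moreover have "(({0..<p}-{a}) \<times> {b}) \<inter> {(a, if b+1 = q then 0 else b+1), (a, if b = 0 then q-1 else b-1)} = {}"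
    by auto
  ultimately show ?thesis unfolding nbrs[OF assms] using assms
    by (subst card_Un_disjoint) auto
qed

lemma star:
  assumes "q \<ge> 3"
  shows "{e \<in> edges (complete_graph p \<box> cycle_graph q). v \<in> e} = (\<lambda>w. {v,w}) ` {w. adjG p q v w}"
proof
  show "{e \<in> edges (complete_graph p \<box> cycle_graph q). v \<in> e} \<subseteq> (\<lambda>w. {v,w}) ` {w. adjG p q v w}"
  proof
    fix e assume "e \<in> {e \<in> edges (complete_graph p \<box> cycle_graph q). v \<in> e}"
    then have e: "e \<in> {{x,y} | x y. adjG p q x y}" "v \<in> e" unfolding edges_char[OF assms] by auto
    then obtain x y where xy: "e = {x,y}" "adjG p q x y" by auto
    show "e \<in> (\<lambda>w. {v,w}) ` {w. adjG p q v w}"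
    proof (cases "v = x")
      case True
      then show ?thesis using xy by (intro image_eqI[of _ _ y]) auto
    next
      case False
      then have "v = y" using e(2) xy(1) by auto
      then show ?thesis using xy adj_sym[OF xy(2)] by (intro image_eqI[of _ _ x]) (auto simp: insert_commute)
    qed
  qed
next
  show "(\<lambda>w. {v,w}) ` {w. adjG p q v w} \<subseteq> {e \<in> edges (complete_graph p \<box> cycle_graph q). v \<in> e}"
  proof
    fix e assume "e \<in> (\<lambda>w. {v,w}) ` {w. adjG p q v w}"
    then obtain w where "e = {v,w}" "adjG p q v w" by auto
    then show "e \<in> {e \<in> edges (complete_graph p \<box> cycle_graph q). v \<in> e}"
      unfolding edges_char[OF assms] by (cases v; cases w) auto
  qed
qed

lemma degree_G:
  assumes "q \<ge> 3" "v \<in> verts (complete_graph p \<box> cycle_graph q)"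
  shows "degree (complete_graph p \<box> cycle_graph q) v = p + 1"
proof -
  obtain a b where v: "v = (a,b)" "a < p" "b < q" using assms(2) verts_G by (cases v) auto
  have "inj_on (\<lambda>w. {v,w}) {w. adjG p q v w}" unfolding inj_on_def by (auto simp: doubleton_eq_iff)
  then show ?thesis unfolding degree_def star[OF assms(1)]
    by (simp add: card_image v card_nbrs[OF assms(1)])
qed

lemma two_G:
  assumes "q \<ge> 3" "f \<in> edges (complete_graph p \<box> cycle_graph q)"
  shows "\<exists>x y. f = {x,y} \<and> x \<noteq> y \<and> x \<in> verts (complete_graph p \<box> cycle_graph q) \<and> y \<in> verts (complete_graph p \<box> cycle_graph q)"
proof -
  obtain x y where xy: "f = {x,y}" "adjG p q x y" using assms(2) unfolding edges_char[OF assms(1)] by auto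
  have "x \<noteq> y" using adj_irr[OF assms(1)] xy(2) by blast
  moreover have "x \<in> verts (complete_graph p \<box> cycle_graph q)" "y \<in> verts (complete_graph p \<box> cycle_graph q)"
    using adj_in[OF xy(2)] unfolding verts_G by auto
  ultimately show ?thesis using xy(1) by blast
qed

lemma no_self_cross: "\<not> crossing ord e e"
proof
  assume "crossing ord e e"
  then obtain u v x y where h: "e={u,v}" "e={x,y}" "ord u < ord x" "ord x < ord v" "ord v < ord y"
    unfolding crossing_def by blast
  then have "x \<in> {u,v}" by blast
  then have "x = u \<or> x = v" by blast
  then show False using h(3,4) by auto
qed

lemma exists_mbe:
  assumes "finite (verts G)" "finite (edges G)"
  shows "\<exists>k ord pg. matching_book_embedding G k ord pg"
proof -
  from finite_imp_inj_to_nat_seg[OF assms(1)]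
  obtain ord :: "'a \<Rightarrow> nat" and n0 where o: "inj_on ord (verts G)" by (elim exE conjE)
  from finite_imp_inj_to_nat_seg[OF assms(2)]
  obtain pg :: "'a set \<Rightarrow> nat" and n where pg1: "pg ` edges G = {i. i < n}" and pg2: "inj_on pg (edges G)"
    by (elim exE conjE)
  have A: "\<forall>e \<in> edges G. pg e < n"
  proof
    fix e assume "e \<in> edges G"
    then have "pg e \<in> pg ` edges G" by (rule imageI)
    then show "pg e < n" unfolding pg1 by simp
  qed
  have B: "\<forall>e \<in> edges G. \<forall>f \<in> edges G. pg e = pg f \<longrightarrow> \<not> crossing ord e f"
  proof (intro ballI impI)
    fix e f assume "e \<in> edges G" "f \<in> edges G" "pg e = pg f"
    then have "e = f" using inj_onD[OF pg2] by metis
    then show "\<not> crossing ord e f" using no_self_cross by simp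
  qed
  have C: "\<forall>e \<in> edges G. \<forall>f \<in> edges G. pg e = pg f \<and> e \<noteq> f \<longrightarrow> e \<inter> f = {}"
  proof (intro ballI impI)
    fix e f assume "e \<in> edges G" "f \<in> edges G" "pg e = pg f \<and> e \<noteq> f"
    then show "e \<inter> f = {}" using inj_onD[OF pg2] by metis
  qed
  have "matching_book_embedding G n ord pg"
    unfolding matching_book_embedding_def using o A B C by (intro conjI)
  then show ?thesis by (intro exI)
qed

lemma lower:
  assumes p: "p \<ge> 3" and q: "q \<ge> 3"
    and mbe: "matching_book_embedding (complete_graph p \<box> cycle_graph q) k ord pg"
  shows "p + 2 \<le> k"
proof (rule ccontr)
  assume "\<not> p + 2 \<le> k"
  then have kle: "k \<le> p + 1" by simp
  let ?G = "complete_graph p \<box> cycle_graph q"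
  have fin: "finite (verts ?G)" unfolding verts_G by simp
  have two: "\<And>f. f \<in> edges ?G \<Longrightarrow> \<exists>x y. f = {x,y} \<and> x \<noteq> y \<and> x \<in> verts ?G \<and> y \<in> verts ?G"
    using two_G[OF q] by blast
  have pgk: "\<And>e. e \<in> edges ?G \<Longrightarrow> pg e < k"
   and mt: "\<And>f g. f \<in> edges ?G \<Longrightarrow> g \<in> edges ?G \<Longrightarrow> pg f = pg g \<Longrightarrow> f \<noteq> g \<Longrightarrow> f \<inter> g = {}"
   and inj: "inj_on ord (verts ?G)"
    using mbe unfolding matching_book_embedding_def by blast+
  have cov: "\<exists>f\<in>edges ?G. v \<in> f \<and> pg f = c" if v: "v \<in> verts ?G" and c: "c < k" for v c
  proof -
    define Ev where "Ev = {e \<in> edges ?G. v \<in> e}"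
    have cE: "card Ev = p + 1" using degree_G[OF q v] unfolding degree_def Ev_def .
    have "inj_on pg Ev"
    proof (rule inj_onI)
      fix e f assume "e \<in> Ev" "f \<in> Ev" "pg e = pg f"
      then show "e = f" using mt unfolding Ev_def by blast
    qed
    then have c1: "card (pg ` Ev) = p + 1" using cE by (simp add: card_image)
    have sub: "pg ` Ev \<subseteq> {..<k}" using pgk unfolding Ev_def by auto
    have "card (pg ` Ev) \<le> card {..<k}" using card_mono[OF _ sub] by simp
    then have "card (pg ` Ev) = card {..<k}" using c1 kle by simp
    then have "pg ` Ev = {..<k}" using card_subset_eq[OF _ sub] by simp
    then have "c \<in> pg ` Ev" using c by simp
    then show ?thesis unfolding Ev_def by auto
  qed
  define r where "r w = card {z\<in>verts ?G. ord z < ord w}" for w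
  have odd_edge: "odd (r a + r b)" if e: "{a,b} \<in> edges ?G" "a \<noteq> b" "a \<in> verts ?G" "b \<in> verts ?G" for a b
  proof -
    have c: "pg {a,b} < k" using pgk e(1) .
    have "ord a \<noteq> ord b" using inj e unfolding inj_on_def by blast
    then consider "ord a < ord b" | "ord b < ord a" by linarith
    then show ?thesis
    proof cases
      case 1
      show ?thesis unfolding r_def
        by (rule parity[OF mbe fin two cov[OF _ c] e(1) refl 1 e(3,4)])
    next
      case 2
      have e': "{b,a} \<in> edges ?G" using e(1) by (simp add: insert_commute)
      have c': "pg {b,a} < k" using c by (simp add: insert_commute)
      have "odd (r b + r a)" unfolding r_def
        by (rule parity[OF mbe fin two cov[OF _ c'] e' refl 2 e(4,3)])
      then show ?thesis by (simp add: add.commute)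
    qed
  qed
  have V: "(0::nat,0::nat) \<in> verts ?G" "(1::nat,0::nat) \<in> verts ?G" "(2::nat,0::nat) \<in> verts ?G"
    unfolding verts_G using p q by auto
  have E: "{(0::nat,0::nat),(1,0)} \<in> edges ?G" "{(1::nat,0::nat),(2,0)} \<in> edges ?G" "{(0::nat,0::nat),(2,0)} \<in> edges ?G"
    unfolding edges_char[OF q] using p q by (auto simp: adjG_def intro!: exI)
  have o1: "odd (r (0,0) + r (1,0))" using odd_edge[OF E(1) _ V(1,2)] by simp
  have o2: "odd (r (1,0) + r (2,0))" using odd_edge[OF E(2) _ V(2,3)] by simp
  have o3: "odd (r (0,0) + r (2,0))" using odd_edge[OF E(3) _ V(1,3)] by simp
  show False using o1 o2 o3 by presburger
qed

theorem lemma2p2: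
  fixes p q :: nat
  assumes "p \<ge> 3" and "q \<ge> 3"
  shows "mbt (complete_graph p \<box> cycle_graph q) \<ge> max_degree (complete_graph p \<box> cycle_graph q) + 1"
proof -
  let ?G = "complete_graph p \<box> cycle_graph q"
  have finV: "finite (verts ?G)" unfolding verts_G by simp
  have "edges ?G \<subseteq> Pow (verts ?G)" using two_G[OF assms(2)] by blast
  then have finE: "finite (edges ?G)" using finV finite_subset by blast
  have "\<exists>ord pg. matching_book_embedding ?G (mbt ?G) ord pg"
    unfolding mbt_def by (rule LeastI_ex) (use exists_mbe[OF finV finE] in blast)
  then have m: "p + 2 \<le> mbt ?G" using lower[OF assms] by blast
  have ne: "verts ?G \<noteq> {}" using assms unfolding verts_G by auto
  have "degree ?G ` verts ?G = {p+1}" using degree_G[OF assms(2)] ne by auto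
  then have "max_degree ?G = p + 1" unfolding max_degree_def by simp
  then show ?thesis using m by simp
qed

end
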